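(* Let $M$ be a principally Goldie*-lifting right $R$-module. (a) If $M$ is distributive (or a duo module), then $M/N$ is principally Goldie*-lifting for every submodule $N$ of $M$. (b) If $N$ is a projection invariant submodule of $M$, i.e. $eN\subseteq N$ for every idempotent $e=e^2\in\mathrm{End}(M)$, then $M/N$ is principally Goldie*-lifting; in particular $M/A$ is principally Goldie*-lifting for every fully invariant submodule $A$ of $M$.
   Context: $R$ is an associative ring with identity; modules are unital right $R$-modules. $M$ is distributive if for all submodules $A,B,C$, $A+(B\cap C)=(A+B)\cap(A+C)$. A submodule is fully invariant if it is mapped into itself by every endomorphism of $M$; $M$ is a duo module if every submodule is fully invariant. $K\ll L$ means $K$ is small in $L$. For submodules $X,Y$ of a module $L$, $X\,\beta^*\,Y$ means $(X+Y)/X\ll L/X$ and $(X+Y)/Y\ll L/Y$. A module $L$ is principally Goldie*-lifting if for every cyclic submodule $X$ of $L$ there is a direct summand $D$ of $L$ with $X\,\beta^*\,D$. *)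

theory Defs
  imports "HOL-Algebra.Ring"
begin

record ('a, 'r) rmod =
  mcarrier :: "'a set"
  madd :: "'a \<Rightarrow> 'a \<Rightarrow> 'a"
  mzero :: "'a"
  msmul :: "'a \<Rightarrow> 'r \<Rightarrow> 'a"

definition right_module :: "('r, 'b) ring_scheme \<Rightarrow> ('a, 'r) rmod \<Rightarrow> bool" where
  "right_module R M \<longleftrightarrow> ring R \<and>
     mzero M \<in> mcarrier M \<and>
     (\<forall>x\<in>mcarrier M. \<forall>y\<in>mcarrier M. madd M x y \<in> mcarrier M) \<and>
     (\<forall>x\<in>mcarrier M. \<forall>y\<in>mcarrier M. \<forall>z\<in>mcarrier M.
        madd M (madd M x y) z = madd M x (madd M y z)) \<and>
     (\<forall>x\<in>mcarrier M. \<forall>y\<in>mcarrier M. madd M x y = madd M y x) \<and>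
     (\<forall>x\<in>mcarrier M. madd M (mzero M) x = x) \<and>
     (\<forall>x\<in>mcarrier M. \<exists>y\<in>mcarrier M. madd M x y = mzero M) \<and>
     (\<forall>x\<in>mcarrier M. \<forall>r\<in>carrier R. msmul M x r \<in> mcarrier M) \<and>
     (\<forall>x\<in>mcarrier M. \<forall>y\<in>mcarrier M. \<forall>r\<in>carrier R.
        msmul M (madd M x y) r = madd M (msmul M x r) (msmul M y r)) \<and>
     (\<forall>x\<in>mcarrier M. \<forall>r\<in>carrier R. \<forall>s\<in>carrier R.
        msmul M x (r \<oplus>\<^bsub>R\<^esub> s) = madd M (msmul M x r) (msmul M x s)) \<and>
     (\<forall>x\<in>mcarrier M. \<forall>r\<in>carrier R. \<forall>s\<in>carrier R.
        msmul M x (r \<otimes>\<^bsub>R\<^esub> s) = msmul M (msmul M x r) s) \<and>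
     (\<forall>x\<in>mcarrier M. msmul M x \<one>\<^bsub>R\<^esub> = x)"

definition submod :: "('r, 'b) ring_scheme \<Rightarrow> ('a, 'r) rmod \<Rightarrow> 'a set \<Rightarrow> bool" where
  "submod R M N \<longleftrightarrow> N \<subseteq> mcarrier M \<and> mzero M \<in> N \<and>
     (\<forall>x\<in>N. \<forall>y\<in>N. madd M x y \<in> N) \<and>
     (\<forall>x\<in>N. \<forall>r\<in>carrier R. msmul M x r \<in> N)"

definition msum :: "('a, 'r) rmod \<Rightarrow> 'a set \<Rightarrow> 'a set \<Rightarrow> 'a set" where
  "msum M A B = {madd M a b | a b. a \<in> A \<and> b \<in> B}"

definition cyc :: "('r, 'b) ring_scheme \<Rightarrow> ('a, 'r) rmod \<Rightarrow> 'a \<Rightarrow> 'a set" where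
  "cyc R M x = {msmul M x r | r. r \<in> carrier R}"

definition direct_summand :: "('r, 'b) ring_scheme \<Rightarrow> ('a, 'r) rmod \<Rightarrow> 'a set \<Rightarrow> bool" where
  "direct_summand R M D \<longleftrightarrow> submod R M D \<and>
     (\<exists>C. submod R M C \<and> msum M D C = mcarrier M \<and> D \<inter> C = {mzero M})"

definition small :: "('r, 'b) ring_scheme \<Rightarrow> ('a, 'r) rmod \<Rightarrow> 'a set \<Rightarrow> bool" where
  "small R M K \<longleftrightarrow> submod R M K \<and>
     (\<forall>X. submod R M X \<longrightarrow> msum M K X = mcarrier M \<longrightarrow> X = mcarrier M)"

definition mcoset :: "('a, 'r) rmod \<Rightarrow> 'a set \<Rightarrow> 'a \<Rightarrow> 'a set" where
  "mcoset M N x = {madd M x n | n. n \<in> N}"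

definition quot_mod :: "('a, 'r) rmod \<Rightarrow> 'a set \<Rightarrow> ('a set, 'r) rmod" where
  "quot_mod M N =
     \<lparr> mcarrier = mcoset M N ` mcarrier M,
       madd = (\<lambda>A B. msum M A B),
       mzero = N,
       msmul = (\<lambda>A r. {madd M (msmul M a r) n | a n. a \<in> A \<and> n \<in> N}) \<rparr>"

definition quot_sub :: "('a, 'r) rmod \<Rightarrow> 'a set \<Rightarrow> 'a set \<Rightarrow> 'a set set" where
  "quot_sub M N S = mcoset M N ` S"

definition beta_star :: "('r, 'b) ring_scheme \<Rightarrow> ('a, 'r) rmod \<Rightarrow> 'a set \<Rightarrow> 'a set \<Rightarrow> bool" where
  "beta_star R M X Y \<longleftrightarrow>
     small R (quot_mod M X) (quot_sub M X (msum M X Y)) \<and>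
     small R (quot_mod M Y) (quot_sub M Y (msum M X Y))"

definition pg_lifting :: "('r, 'b) ring_scheme \<Rightarrow> ('a, 'r) rmod \<Rightarrow> bool" where
  "pg_lifting R M \<longleftrightarrow>
     (\<forall>x\<in>mcarrier M. \<exists>D. direct_summand R M D \<and> beta_star R M (cyc R M x) D)"

definition mod_distributive :: "('r, 'b) ring_scheme \<Rightarrow> ('a, 'r) rmod \<Rightarrow> bool" where
  "mod_distributive R M \<longleftrightarrow>
     (\<forall>A B C. submod R M A \<longrightarrow> submod R M B \<longrightarrow> submod R M C \<longrightarrow>
        msum M A (B \<inter> C) = msum M A B \<inter> msum M A C)"

text \<open>R-linear endomorphisms of M (only their values on the carrier matter).\<close>
definition endo :: "('r, 'b) ring_scheme \<Rightarrow> ('a, 'r) rmod \<Rightarrow> ('a \<Rightarrow> 'a) \<Rightarrow> bool" where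
  "endo R M f \<longleftrightarrow> (\<forall>x\<in>mcarrier M. f x \<in> mcarrier M) \<and>
     (\<forall>x\<in>mcarrier M. \<forall>y\<in>mcarrier M. f (madd M x y) = madd M (f x) (f y)) \<and>
     (\<forall>x\<in>mcarrier M. \<forall>r\<in>carrier R. f (msmul M x r) = msmul M (f x) r)"

definition fully_invariant :: "('r, 'b) ring_scheme \<Rightarrow> ('a, 'r) rmod \<Rightarrow> 'a set \<Rightarrow> bool" where
  "fully_invariant R M N \<longleftrightarrow> submod R M N \<and> (\<forall>f. endo R M f \<longrightarrow> f ` N \<subseteq> N)"

definition duo_module :: "('r, 'b) ring_scheme \<Rightarrow> ('a, 'r) rmod \<Rightarrow> bool" where
  "duo_module R M \<longleftrightarrow> (\<forall>N. submod R M N \<longrightarrow> fully_invariant R M N)"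

definition projection_invariant :: "('r, 'b) ring_scheme \<Rightarrow> ('a, 'r) rmod \<Rightarrow> 'a set \<Rightarrow> bool" where
  "projection_invariant R M N \<longleftrightarrow> submod R M N \<and>
     (\<forall>e. endo R M e \<longrightarrow> (\<forall>x\<in>mcarrier M. e (e x) = e x) \<longrightarrow> e ` N \<subseteq> N)"

end

theory Submission
  imports Defs
begin



locale rmodule =
  fixes R :: "('r, 'b) ring_scheme" and M :: "('a, 'r) rmod"
  assumes RM: "right_module R M"
begin

lemma ringR: "ring R" using RM unfolding right_module_def by auto

lemma zero_c[simp]: "mzero M \<in> mcarrier M" using RM unfolding right_module_def by auto
lemma add_c[simp]: "x \<in> mcarrier M \<Longrightarrow> y \<in> mcarrier M \<Longrightarrow> madd M x y \<in> mcarrier M"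
  using RM unfolding right_module_def by auto
lemma add_assoc: "x \<in> mcarrier M \<Longrightarrow> y \<in> mcarrier M \<Longrightarrow> z \<in> mcarrier M \<Longrightarrow>
   madd M (madd M x y) z = madd M x (madd M y z)"
  using RM unfolding right_module_def by auto
lemma add_comm: "x \<in> mcarrier M \<Longrightarrow> y \<in> mcarrier M \<Longrightarrow> madd M x y = madd M y x"
  using RM unfolding right_module_def by auto
lemma add_lcomm: "x \<in> mcarrier M \<Longrightarrow> y \<in> mcarrier M \<Longrightarrow> z \<in> mcarrier M \<Longrightarrow>
   madd M x (madd M y z) = madd M y (madd M x z)"
  by (metis add_assoc add_comm)
lemmas add_ac = add_assoc add_comm add_lcomm
lemma zero_l[simp]: "x \<in> mcarrier M \<Longrightarrow> madd M (mzero M) x = x"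
  using RM unfolding right_module_def by auto
lemma zero_r[simp]: "x \<in> mcarrier M \<Longrightarrow> madd M x (mzero M) = x"
  using zero_l add_comm by simp
lemma inv_ex: "x \<in> mcarrier M \<Longrightarrow> \<exists>y\<in>mcarrier M. madd M x y = mzero M"
  using RM unfolding right_module_def by meson
lemma smul_c[simp]: "x \<in> mcarrier M \<Longrightarrow> r \<in> carrier R \<Longrightarrow> msmul M x r \<in> mcarrier M"
  using RM unfolding right_module_def by auto
lemma smul_add: "x \<in> mcarrier M \<Longrightarrow> y \<in> mcarrier M \<Longrightarrow> r \<in> carrier R \<Longrightarrow>
   msmul M (madd M x y) r = madd M (msmul M x r) (msmul M y r)"
  using RM unfolding right_module_def by auto
lemma smul_radd: "x \<in> mcarrier M \<Longrightarrow> r \<in> carrier R \<Longrightarrow> s \<in> carrier R \<Longrightarrow>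
   msmul M x (r \<oplus>\<^bsub>R\<^esub> s) = madd M (msmul M x r) (msmul M x s)"
  using RM unfolding right_module_def by auto
lemma smul_one[simp]: "x \<in> mcarrier M \<Longrightarrow> msmul M x \<one>\<^bsub>R\<^esub> = x"
  using RM unfolding right_module_def by auto

lemma cancel: assumes "a \<in> mcarrier M" "b \<in> mcarrier M" "c \<in> mcarrier M"
  "madd M a b = madd M a c" shows "b = c"
proof -
  obtain y where y: "y \<in> mcarrier M" "madd M a y = mzero M" using inv_ex assms(1) by blast
  have "madd M y (madd M a b) = madd M y (madd M a c)" using assms by simp
  moreover have "madd M y (madd M a b) = b" using y assms
    by (metis add_assoc add_comm zero_l)
  moreover have "madd M y (madd M a c) = c" using y assms
    by (metis add_assoc add_comm zero_l)
  ultimately show ?thesis by simp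
qed

lemma smul_zero[simp]: assumes "x \<in> mcarrier M" shows "msmul M x \<zero>\<^bsub>R\<^esub> = mzero M"
proof -
  interpret ring R by (rule ringR)
  have "msmul M x \<zero>\<^bsub>R\<^esub> = madd M (msmul M x \<zero>\<^bsub>R\<^esub>) (msmul M x \<zero>\<^bsub>R\<^esub>)"
    using smul_radd[of x "\<zero>\<^bsub>R\<^esub>" "\<zero>\<^bsub>R\<^esub>"] assms by simp
  then have "madd M (msmul M x \<zero>\<^bsub>R\<^esub>) (mzero M) = madd M (msmul M x \<zero>\<^bsub>R\<^esub>) (msmul M x \<zero>\<^bsub>R\<^esub>)"
    using assms by simp
  then show ?thesis using cancel assms by (metis smul_c zero_c zero_closed)
qed

definition neg where "neg x = msmul M x (\<ominus>\<^bsub>R\<^esub> \<one>\<^bsub>R\<^esub>)"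

lemma neg_c[simp]: "x \<in> mcarrier M \<Longrightarrow> neg x \<in> mcarrier M"
proof -
  interpret ring R by (rule ringR)
  show "x \<in> mcarrier M \<Longrightarrow> neg x \<in> mcarrier M" unfolding neg_def by simp
qed

lemma neg_r[simp]: assumes "x \<in> mcarrier M" shows "madd M x (neg x) = mzero M"
proof -
  interpret ring R by (rule ringR)
  have "madd M x (neg x) = msmul M x (\<one>\<^bsub>R\<^esub> \<oplus>\<^bsub>R\<^esub> \<ominus>\<^bsub>R\<^esub> \<one>\<^bsub>R\<^esub>)"
    unfolding neg_def using assms smul_radd by simp
  also have "\<one>\<^bsub>R\<^esub> \<oplus>\<^bsub>R\<^esub> \<ominus>\<^bsub>R\<^esub> \<one>\<^bsub>R\<^esub> = \<zero>\<^bsub>R\<^esub>" by (simp add: r_neg)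
  finally show ?thesis using assms by simp
qed

lemma neg_l[simp]: "x \<in> mcarrier M \<Longrightarrow> madd M (neg x) x = mzero M"
  using add_comm neg_r neg_c by metis

lemma neg_cancel_l[simp]: "x \<in> mcarrier M \<Longrightarrow> y \<in> mcarrier M \<Longrightarrow> madd M (neg x) (madd M x y) = y"
  by (simp add: add_assoc[symmetric])
lemma neg_cancel_r[simp]: "x \<in> mcarrier M \<Longrightarrow> y \<in> mcarrier M \<Longrightarrow> madd M x (madd M (neg x) y) = y"
  by (simp add: add_assoc[symmetric])

lemma submod_neg: "submod R M N \<Longrightarrow> x \<in> N \<Longrightarrow> neg x \<in> N"
proof -
  interpret ring R by (rule ringR)
  show "submod R M N \<Longrightarrow> x \<in> N \<Longrightarrow> neg x \<in> N" unfolding submod_def neg_def by simp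
qed

lemma submod_c: "submod R M N \<Longrightarrow> x \<in> N \<Longrightarrow> x \<in> mcarrier M"
  unfolding submod_def by blast
lemma submod_zero: "submod R M N \<Longrightarrow> mzero M \<in> N"
  unfolding submod_def by blast
lemma submod_add: "submod R M N \<Longrightarrow> x \<in> N \<Longrightarrow> y \<in> N \<Longrightarrow> madd M x y \<in> N"
  unfolding submod_def by blast
lemma submod_smul: "submod R M N \<Longrightarrow> x \<in> N \<Longrightarrow> r \<in> carrier R \<Longrightarrow> msmul M x r \<in> N"
  unfolding submod_def by blast

lemma submod_carrier: "submod R M (mcarrier M)"
  unfolding submod_def by auto

end



context rmodule
begin

lemma msum_iff: "z \<in> msum M A B \<longleftrightarrow> (\<exists>a\<in>A. \<exists>b\<in>B. z = madd M a b)"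
  unfolding msum_def by auto

lemma msumI: "a \<in> A \<Longrightarrow> b \<in> B \<Longrightarrow> madd M a b \<in> msum M A B"
  unfolding msum_def by auto

lemma submod_msum: assumes "submod R M A" "submod R M B" shows "submod R M (msum M A B)"
proof -
  note c = submod_c[OF assms(1)] submod_c[OF assms(2)]
  have "msum M A B \<subseteq> mcarrier M" using c by (auto simp: msum_iff)
  moreover have "mzero M \<in> msum M A B"
    using msumI[OF submod_zero[OF assms(1)] submod_zero[OF assms(2)]] by simp
  moreover have "\<forall>x\<in>msum M A B. \<forall>y\<in>msum M A B. madd M x y \<in> msum M A B"
  proof (intro ballI)
    fix x y assume "x \<in> msum M A B" "y \<in> msum M A B"
    then obtain a b a' b' where ab: "a \<in> A" "b \<in> B" "x = madd M a b" "a' \<in> A" "b' \<in> B" "y = madd M a' b'"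
      by (auto simp: msum_iff)
    then have "madd M x y = madd M (madd M a a') (madd M b b')"
      using c by (simp add: add_ac)
    then show "madd M x y \<in> msum M A B"
      using ab msumI submod_add assms by metis
  qed
  moreover have "\<forall>x\<in>msum M A B. \<forall>r\<in>carrier R. msmul M x r \<in> msum M A B"
  proof (intro ballI)
    fix x r assume "x \<in> msum M A B" "r \<in> carrier R"
    then obtain a b where ab: "a \<in> A" "b \<in> B" "x = madd M a b"
      by (auto simp: msum_iff)
    then have "msmul M x r = madd M (msmul M a r) (msmul M b r)"
      using c \<open>r \<in> carrier R\<close> by (simp add: smul_add)
    then show "msmul M x r \<in> msum M A B"
      using ab msumI submod_smul assms \<open>r \<in> carrier R\<close> by metis
  qed
  ultimately show ?thesis unfolding submod_def by blast
qed

lemma msum_left: "mzero M \<in> B \<Longrightarrow> A \<subseteq> mcarrier M \<Longrightarrow> A \<subseteq> msum M A B"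
  unfolding msum_def by force
lemma msum_right: "mzero M \<in> A \<Longrightarrow> B \<subseteq> mcarrier M \<Longrightarrow> B \<subseteq> msum M A B"
  unfolding msum_def by force
lemma msum_le: "submod R M C \<Longrightarrow> A \<subseteq> C \<Longrightarrow> B \<subseteq> C \<Longrightarrow> msum M A B \<subseteq> C"
  unfolding msum_def using submod_add by blast
lemma msum_mono: "A \<subseteq> A' \<Longrightarrow> B \<subseteq> B' \<Longrightarrow> msum M A B \<subseteq> msum M A' B'"
  unfolding msum_def by blast
lemma msum_car: "A \<subseteq> mcarrier M \<Longrightarrow> B \<subseteq> mcarrier M \<Longrightarrow> msum M A B \<subseteq> mcarrier M"
  unfolding msum_def by (auto intro!: add_c simp: subset_iff)

lemma mcoset_iff: "z \<in> mcoset M N x \<longleftrightarrow> (\<exists>n\<in>N. z = madd M x n)"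
  unfolding mcoset_def by auto

context fixes N assumes N: "submod R M N"
begin

lemma Nc: "n \<in> N \<Longrightarrow> n \<in> mcarrier M" using submod_c[OF N] .

lemma mcoset_self: "x \<in> mcarrier M \<Longrightarrow> x \<in> mcoset M N x"
  using submod_zero[OF N] by (force simp: mcoset_iff)

lemma mcoset_car: "x \<in> mcarrier M \<Longrightarrow> mcoset M N x \<subseteq> mcarrier M"
  using Nc by (auto simp: mcoset_iff)

lemma mcoset_eq: assumes "x \<in> mcarrier M" "y \<in> mcoset M N x" shows "mcoset M N y = mcoset M N x"
proof -
  obtain n where n: "n \<in> N" "y = madd M x n" using assms by (auto simp: mcoset_iff)
  show ?thesis
  proof
    show "mcoset M N y \<subseteq> mcoset M N x"
    proof
      fix z assume "z \<in> mcoset M N y"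
      then obtain m where m: "m \<in> N" "z = madd M y m" by (auto simp: mcoset_iff)
      then have "z = madd M x (madd M n m)" using n assms Nc by (simp add: add_assoc)
      then show "z \<in> mcoset M N x" using submod_add[OF N n(1) m(1)] by (auto simp: mcoset_iff)
    qed
  next
    show "mcoset M N x \<subseteq> mcoset M N y"
    proof
      fix z assume "z \<in> mcoset M N x"
      then obtain m where m: "m \<in> N" "z = madd M x m" by (auto simp: mcoset_iff)
      then have "z = madd M y (madd M (neg n) m)" using n assms Nc
        by (simp add: add_assoc[symmetric]) (simp add: add_assoc)
      then show "z \<in> mcoset M N y" using submod_add[OF N submod_neg[OF N n(1)] m(1)]
        by (auto simp: mcoset_iff)
    qed
  qed
qed

lemma mcoset_eq_iff: assumes "x \<in> mcarrier M" "y \<in> mcarrier M"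
  shows "mcoset M N x = mcoset M N y \<longleftrightarrow> y \<in> mcoset M N x"
  using mcoset_eq mcoset_self assms by metis

lemma mcoset_N: assumes "n \<in> N" shows "mcoset M N n = N"
proof -
  have "mcoset M N (mzero M) = N" using Nc by (auto simp: mcoset_iff)
  moreover have "n \<in> mcoset M N (mzero M)" using assms Nc by (auto simp: mcoset_iff)
  ultimately show ?thesis using mcoset_eq zero_c by metis
qed

lemma mcoset_add: assumes "x \<in> mcarrier M" "y \<in> mcarrier M"
  shows "msum M (mcoset M N x) (mcoset M N y) = mcoset M N (madd M x y)"
proof
  show "msum M (mcoset M N x) (mcoset M N y) \<subseteq> mcoset M N (madd M x y)"
  proof
    fix z assume "z \<in> msum M (mcoset M N x) (mcoset M N y)"
    then obtain n m where nm: "n \<in> N" "m \<in> N" "z = madd M (madd M x n) (madd M y m)"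
      by (auto simp: msum_iff mcoset_iff)
    then have "z = madd M (madd M x y) (madd M n m)" using assms Nc by (simp add: add_ac)
    then show "z \<in> mcoset M N (madd M x y)" using submod_add[OF N nm(1,2)] by (auto simp: mcoset_iff)
  qed
next
  show "mcoset M N (madd M x y) \<subseteq> msum M (mcoset M N x) (mcoset M N y)"
  proof
    fix z assume "z \<in> mcoset M N (madd M x y)"
    then obtain n where n: "n \<in> N" "z = madd M (madd M x y) n" by (auto simp: mcoset_iff)
    then have "z = madd M (madd M x n) (madd M y (mzero M))" using assms Nc by (simp add: add_ac)
    moreover have "madd M x n \<in> mcoset M N x" using n(1) by (auto simp: mcoset_iff)
    moreover have "madd M y (mzero M) \<in> mcoset M N y" using submod_zero[OF N] by (auto simp: mcoset_iff)
    ultimately show "z \<in> msum M (mcoset M N x) (mcoset M N y)"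
      using msumI by metis
  qed
qed

lemma q_car: "mcarrier (quot_mod M N) = mcoset M N ` mcarrier M"
  unfolding quot_mod_def by simp
lemma q_zero: "mzero (quot_mod M N) = N"
  unfolding quot_mod_def by simp
lemma q_add: "madd (quot_mod M N) A B = msum M A B"
  unfolding quot_mod_def by simp

lemma q_smul: assumes "x \<in> mcarrier M" "r \<in> carrier R"
  shows "msmul (quot_mod M N) (mcoset M N x) r = mcoset M N (msmul M x r)"
proof -
  have "{madd M (msmul M a r) n | a n. a \<in> mcoset M N x \<and> n \<in> N} = mcoset M N (msmul M x r)"
  proof
    show "{madd M (msmul M a r) n | a n. a \<in> mcoset M N x \<and> n \<in> N} \<subseteq> mcoset M N (msmul M x r)"
    proof
      fix z assume "z \<in> {madd M (msmul M a r) n | a n. a \<in> mcoset M N x \<and> n \<in> N}"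
      then obtain m n where nm: "n \<in> N" "m \<in> N" "z = madd M (msmul M (madd M x m) r) n"
        by (auto simp: mcoset_iff)
      then have "z = madd M (msmul M x r) (madd M (msmul M m r) n)" using assms Nc
        by (simp add: smul_add add_assoc)
      then show "z \<in> mcoset M N (msmul M x r)"
        using submod_add[OF N submod_smul[OF N nm(2) assms(2)] nm(1)] by (auto simp: mcoset_iff)
    qed
  next
    show "mcoset M N (msmul M x r) \<subseteq> {madd M (msmul M a r) n | a n. a \<in> mcoset M N x \<and> n \<in> N}"
    proof
      fix z assume "z \<in> mcoset M N (msmul M x r)"
      then obtain n where "n \<in> N" "z = madd M (msmul M x r) n" by (auto simp: mcoset_iff)
      then show "z \<in> {madd M (msmul M a r) n | a n. a \<in> mcoset M N x \<and> n \<in> N}"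
        using mcoset_self[OF assms(1)] by blast
    qed
  qed
  then show ?thesis unfolding quot_mod_def by simp
qed

lemma quot_module: "right_module R (quot_mod M N)"
proof -
  interpret ring R by (rule ringR)
  have z: "N \<in> mcoset M N ` mcarrier M" using mcoset_N[OF submod_zero[OF N]] by force
  show ?thesis unfolding right_module_def q_car q_zero q_add
  proof (intro conjI ringR z ballI; (elim imageE)?; hypsubst?)
    fix x y assume "x \<in> mcarrier M" "y \<in> mcarrier M"
    then show "msum M (mcoset M N x) (mcoset M N y) \<in> mcoset M N ` mcarrier M"
      by (simp add: mcoset_add)
  next
    fix x y z assume "x \<in> mcarrier M" "y \<in> mcarrier M" "z \<in> mcarrier M"
    then show "msum M (msum M (mcoset M N x) (mcoset M N y)) (mcoset M N z) =
       msum M (mcoset M N x) (msum M (mcoset M N y) (mcoset M N z))"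
      by (simp add: mcoset_add add_assoc)
  next
    fix x y assume "x \<in> mcarrier M" "y \<in> mcarrier M"
    then show "msum M (mcoset M N x) (mcoset M N y) = msum M (mcoset M N y) (mcoset M N x)"
      by (simp add: mcoset_add add_comm)
  next
    fix x assume "x \<in> mcarrier M"
    then show "msum M N (mcoset M N x) = mcoset M N x"
      using mcoset_add[of "mzero M" x] mcoset_N[OF submod_zero[OF N]] by simp
  next
    fix x assume "x \<in> mcarrier M"
    then show "\<exists>y\<in>mcoset M N ` mcarrier M. msum M (mcoset M N x) y = N"
      using mcoset_add[of x "neg x"] mcoset_N[OF submod_zero[OF N]]
      by (intro bexI[of _ "mcoset M N (neg x)"]) auto
  next
    fix x r assume "x \<in> mcarrier M" "r \<in> carrier R"
    then show "msmul (quot_mod M N) (mcoset M N x) r \<in> mcoset M N ` mcarrier M"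
      by (simp add: q_smul)
  next
    fix x y r assume "x \<in> mcarrier M" "y \<in> mcarrier M" "r \<in> carrier R"
    then show "msmul (quot_mod M N) (msum M (mcoset M N x) (mcoset M N y)) r =
          msum M (msmul (quot_mod M N) (mcoset M N x) r) (msmul (quot_mod M N) (mcoset M N y) r)"
      by (simp add: q_smul mcoset_add smul_add)
  next
    fix x r s assume "x \<in> mcarrier M" "r \<in> carrier R" "s \<in> carrier R"
    then show "msmul (quot_mod M N) (mcoset M N x) (r \<oplus>\<^bsub>R\<^esub> s) =
       msum M (msmul (quot_mod M N) (mcoset M N x) r) (msmul (quot_mod M N) (mcoset M N x) s)"
      by (simp add: q_smul mcoset_add smul_radd)
  next
    fix x r s assume "x \<in> mcarrier M" "r \<in> carrier R" "s \<in> carrier R"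
    then show "msmul (quot_mod M N) (mcoset M N x) (r \<otimes>\<^bsub>R\<^esub> s) =
       msmul (quot_mod M N) (msmul (quot_mod M N) (mcoset M N x) r) s"
      using RM unfolding right_module_def by (simp add: q_smul)
  next
    fix x assume "x \<in> mcarrier M"
    then show "msmul (quot_mod M N) (mcoset M N x) \<one>\<^bsub>R\<^esub> = mcoset M N x"
      by (simp add: q_smul)
  qed
qed

end
end



context rmodule
begin

context fixes N assumes N: "submod R M N"
begin

definition sat where "sat S \<longleftrightarrow> S \<subseteq> mcarrier M \<and> (\<forall>s\<in>S. \<forall>n\<in>N. madd M s n \<in> S)"

lemma sat_submod: "submod R M S \<Longrightarrow> N \<subseteq> S \<Longrightarrow> sat S"
  unfolding sat_def using submod_c submod_add by blast

lemma qs_iff: "C \<in> quot_sub M N S \<longleftrightarrow> (\<exists>s\<in>S. C = mcoset M N s)"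
  unfolding quot_sub_def by auto

lemma mem_coset_sat: "sat T \<Longrightarrow> t \<in> T \<Longrightarrow> z \<in> mcoset M N t \<Longrightarrow> z \<in> T"
  unfolding sat_def by (auto simp: mcoset_iff)

lemma union_qs: "sat S \<Longrightarrow> \<Union>(quot_sub M N S) = S"
  unfolding quot_sub_def using mem_coset_sat mcoset_self[OF N] unfolding sat_def by blast

lemma qs_mono_rev: assumes "sat T" "S \<subseteq> mcarrier M" "quot_sub M N S \<subseteq> quot_sub M N T"
  shows "S \<subseteq> T"
proof
  fix s assume s: "s \<in> S"
  have "mcoset M N s \<in> quot_sub M N T" using s assms(3) unfolding quot_sub_def by blast
  then obtain t where t: "t \<in> T" "mcoset M N s = mcoset M N t" by (auto simp: qs_iff)
  have "s \<in> mcoset M N t" using t(2) mcoset_self[OF N] s assms(2) by blast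
  then show "s \<in> T" using mem_coset_sat assms(1) t(1) by blast
qed

lemma qs_inj: "sat S \<Longrightarrow> sat T \<Longrightarrow> quot_sub M N S = quot_sub M N T \<Longrightarrow> S = T"
  using qs_mono_rev unfolding sat_def by (metis subset_antisym subset_refl)

lemma qs_Int: assumes "sat S" "sat T"
  shows "quot_sub M N S \<inter> quot_sub M N T = quot_sub M N (S \<inter> T)"
proof
  show "quot_sub M N S \<inter> quot_sub M N T \<subseteq> quot_sub M N (S \<inter> T)"
  proof
    fix C assume "C \<in> quot_sub M N S \<inter> quot_sub M N T"
    then obtain s t where st: "s \<in> S" "t \<in> T" "C = mcoset M N s" "C = mcoset M N t"
      by (auto simp: qs_iff)
    have "s \<in> mcoset M N t" using st mcoset_self[OF N] assms unfolding sat_def by blast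
    then have "s \<in> T" using mem_coset_sat assms(2) st(2) by blast
    then show "C \<in> quot_sub M N (S \<inter> T)" using st by (auto simp: qs_iff)
  qed
qed (auto simp: qs_iff)

lemma qs_msum: assumes "S \<subseteq> mcarrier M" "T \<subseteq> mcarrier M"
  shows "msum (quot_mod M N) (quot_sub M N S) (quot_sub M N T) = quot_sub M N (msum M S T)"
proof -
  have "msum (quot_mod M N) (quot_sub M N S) (quot_sub M N T) =
      {msum M (mcoset M N s) (mcoset M N t) | s t. s \<in> S \<and> t \<in> T}"
    unfolding msum_def[of "quot_mod M N"] q_add[OF N] quot_sub_def by blast
  also have "\<dots> = {mcoset M N (madd M s t) | s t. s \<in> S \<and> t \<in> T}"
    using mcoset_add[OF N] assms by blast
  also have "\<dots> = quot_sub M N (msum M S T)"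
    unfolding quot_sub_def msum_def by blast
  finally show ?thesis .
qed

lemma q_car': "mcarrier (quot_mod M N) = quot_sub M N (mcarrier M)"
  using q_car[OF N] unfolding quot_sub_def .

lemma submod_qs: assumes "submod R M S" "N \<subseteq> S"
  shows "submod R (quot_mod M N) (quot_sub M N S)"
proof -
  have Sc: "S \<subseteq> mcarrier M" using submod_c assms(1) by blast
  have "quot_sub M N S \<subseteq> mcarrier (quot_mod M N)" using q_car' Sc unfolding quot_sub_def by blast
  moreover have "mzero (quot_mod M N) \<in> quot_sub M N S"
    using q_zero[OF N] mcoset_N[OF N submod_zero[OF N]] submod_zero[OF N] assms(2)
    unfolding quot_sub_def by force
  moreover have "\<forall>x\<in>quot_sub M N S. \<forall>y\<in>quot_sub M N S. madd (quot_mod M N) x y \<in> quot_sub M N S"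
    unfolding quot_sub_def q_add[OF N] using mcoset_add[OF N] Sc submod_add[OF assms(1)]
    by (auto simp: subset_iff)
  moreover have "\<forall>x\<in>quot_sub M N S. \<forall>r\<in>carrier R. msmul (quot_mod M N) x r \<in> quot_sub M N S"
    unfolding quot_sub_def using q_smul[OF N] Sc submod_smul[OF assms(1)]
    by (auto simp: subset_iff)
  ultimately show ?thesis unfolding submod_def by blast
qed

lemma submod_q_rev: assumes "submod R (quot_mod M N) Y'"
  shows "submod R M (\<Union>Y') \<and> N \<subseteq> \<Union>Y' \<and> Y' = quot_sub M N (\<Union>Y')"
proof -
  have Y'c: "Y' \<subseteq> mcoset M N ` mcarrier M" using assms q_car[OF N] unfolding submod_def by blast
  have rep: "\<And>C y. C \<in> Y' \<Longrightarrow> y \<in> C \<Longrightarrow> y \<in> mcarrier M \<and> C = mcoset M N y"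
  proof -
    fix C y assume "C \<in> Y'" "y \<in> C"
    then obtain x where x: "x \<in> mcarrier M" "C = mcoset M N x" using Y'c by blast
    then show "y \<in> mcarrier M \<and> C = mcoset M N y" using \<open>y \<in> C\<close> mcoset_car[OF N] mcoset_eq[OF N] by blast
  qed
  have NY: "N \<in> Y'" using assms q_zero[OF N] unfolding submod_def by metis
  have A: "N \<subseteq> \<Union>Y'" using NY by blast
  have "\<Union>Y' \<subseteq> mcarrier M" using rep by blast
  moreover have "mzero M \<in> \<Union>Y'" using A submod_zero[OF N] by blast
  moreover have "\<forall>x\<in>\<Union>Y'. \<forall>y\<in>\<Union>Y'. madd M x y \<in> \<Union>Y'"
  proof (intro ballI)
    fix x y assume "x \<in> \<Union>Y'" "y \<in> \<Union>Y'"
    then obtain C D where CD: "C \<in> Y'" "D \<in> Y'" "x \<in> C" "y \<in> D" by blast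
    then have e: "C = mcoset M N x" "D = mcoset M N y" "x \<in> mcarrier M" "y \<in> mcarrier M" using rep by blast+
    have "madd (quot_mod M N) C D \<in> Y'" using CD(1,2) assms unfolding submod_def by blast
    then have "mcoset M N (madd M x y) \<in> Y'" using e q_add[OF N] mcoset_add[OF N] by simp
    then moreover have "madd M x y \<in> mcoset M N (madd M x y)" using mcoset_self[OF N] e add_c by blast
    ultimately show "madd M x y \<in> \<Union>Y'" by blast
  qed
  moreover have "\<forall>x\<in>\<Union>Y'. \<forall>r\<in>carrier R. msmul M x r \<in> \<Union>Y'"
  proof (intro ballI)
    fix x r assume "x \<in> \<Union>Y'" "r \<in> carrier R"
    then obtain C where CD: "C \<in> Y'" "x \<in> C" by blast
    then have e: "C = mcoset M N x" "x \<in> mcarrier M" using rep by blast+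
    have "msmul (quot_mod M N) C r \<in> Y'" using CD(1) assms \<open>r \<in> carrier R\<close> unfolding submod_def by blast
    then have "mcoset M N (msmul M x r) \<in> Y'" using e q_smul[OF N] \<open>r \<in> carrier R\<close> by simp
    then moreover have "msmul M x r \<in> mcoset M N (msmul M x r)" using mcoset_self[OF N] e smul_c \<open>r \<in> carrier R\<close> by blast
    ultimately show "msmul M x r \<in> \<Union>Y'" by blast
  qed
  ultimately have S: "submod R M (\<Union>Y')" unfolding submod_def by blast
  have "Y' = quot_sub M N (\<Union>Y')"
  proof
    show "Y' \<subseteq> quot_sub M N (\<Union>Y')"
    proof
      fix C assume C: "C \<in> Y'"
      then obtain x where x: "x \<in> mcarrier M" "C = mcoset M N x" using Y'c by blast
      then have "x \<in> C" using mcoset_self[OF N] by blast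
      then show "C \<in> quot_sub M N (\<Union>Y')" using C x by (auto simp: qs_iff)
    qed
    show "quot_sub M N (\<Union>Y') \<subseteq> Y'" using rep by (auto simp: qs_iff)
  qed
  then show ?thesis using S A by blast
qed

lemma small_char: assumes "submod R M S" "N \<subseteq> S"
  shows "small R (quot_mod M N) (quot_sub M N S) \<longleftrightarrow>
    (\<forall>Y. submod R M Y \<longrightarrow> N \<subseteq> Y \<longrightarrow> msum M S Y = mcarrier M \<longrightarrow> Y = mcarrier M)"
proof
  have Sc: "S \<subseteq> mcarrier M" using submod_c assms(1) by blast
  assume sm: "small R (quot_mod M N) (quot_sub M N S)"
  show "\<forall>Y. submod R M Y \<longrightarrow> N \<subseteq> Y \<longrightarrow> msum M S Y = mcarrier M \<longrightarrow> Y = mcarrier M"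
  proof (intro allI impI)
    fix Y assume Y: "submod R M Y" "N \<subseteq> Y" "msum M S Y = mcarrier M"
    have Yc: "Y \<subseteq> mcarrier M" using submod_c Y(1) by blast
    have "msum (quot_mod M N) (quot_sub M N S) (quot_sub M N Y) = mcarrier (quot_mod M N)"
      using qs_msum Sc Yc Y(3) q_car' by simp
    then have "quot_sub M N Y = quot_sub M N (mcarrier M)"
      using sm submod_qs[OF Y(1,2)] q_car' unfolding small_def by simp
    moreover have "sat Y" using sat_submod Y by blast
    moreover have "sat (mcarrier M)" using sat_submod[OF submod_carrier] submod_c[OF N] by blast
    ultimately show "Y = mcarrier M" using qs_inj by blast
  qed
next
  have Sc: "S \<subseteq> mcarrier M" using submod_c assms(1) by blast
  assume H: "\<forall>Y. submod R M Y \<longrightarrow> N \<subseteq> Y \<longrightarrow> msum M S Y = mcarrier M \<longrightarrow> Y = mcarrier M"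
  show "small R (quot_mod M N) (quot_sub M N S)"
    unfolding small_def
  proof (intro conjI allI impI)
    show "submod R (quot_mod M N) (quot_sub M N S)" using submod_qs assms .
    fix Y' assume Y': "submod R (quot_mod M N) Y'"
      "msum (quot_mod M N) (quot_sub M N S) Y' = mcarrier (quot_mod M N)"
    define Y where "Y = \<Union>Y'"
    have Y: "submod R M Y" "N \<subseteq> Y" "Y' = quot_sub M N Y" using submod_q_rev[OF Y'(1)] Y_def by auto
    have Yc: "Y \<subseteq> mcarrier M" using submod_c Y(1) by blast
    have "quot_sub M N (msum M S Y) = quot_sub M N (mcarrier M)"
      using Y'(2) Y(3) qs_msum Sc Yc q_car' by simp
    moreover have "sat (msum M S Y)"
      using sat_submod submod_msum[OF assms(1) Y(1)] Y(2) msum_right[OF submod_zero[OF assms(1)] Yc] by blast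
    moreover have "sat (mcarrier M)" using sat_submod[OF submod_carrier] submod_c[OF N] by blast
    ultimately have "msum M S Y = mcarrier M" using qs_inj by blast
    then have "Y = mcarrier M" using H Y by blast
    then show "Y' = mcarrier (quot_mod M N)" using Y(3) q_car' by simp
  qed
qed

end
end



context rmodule
begin

lemma submod_cyc: assumes "x \<in> mcarrier M" shows "submod R M (cyc R M x)"
proof -
  interpret ring R by (rule ringR)
  have "cyc R M x \<subseteq> mcarrier M" using assms unfolding cyc_def by auto
  moreover have "mzero M \<in> cyc R M x" unfolding cyc_def
    using smul_zero[OF assms] zero_closed by (metis (mono_tags, lifting) mem_Collect_eq)
  moreover have "\<forall>a\<in>cyc R M x. \<forall>b\<in>cyc R M x. madd M a b \<in> cyc R M x"
  proof (intro ballI)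
    fix a b assume "a \<in> cyc R M x" "b \<in> cyc R M x"
    then obtain r s where "r \<in> carrier R" "s \<in> carrier R" "a = msmul M x r" "b = msmul M x s"
      unfolding cyc_def by blast
    then have "madd M a b = msmul M x (r \<oplus>\<^bsub>R\<^esub> s)" "r \<oplus>\<^bsub>R\<^esub> s \<in> carrier R"
      using smul_radd[OF assms] by auto
    then show "madd M a b \<in> cyc R M x" unfolding cyc_def by blast
  qed
  moreover have "\<forall>a\<in>cyc R M x. \<forall>s\<in>carrier R. msmul M a s \<in> cyc R M x"
  proof (intro ballI)
    fix a s assume "a \<in> cyc R M x" "s \<in> carrier R"
    then obtain r where r: "r \<in> carrier R" "a = msmul M x r"
      unfolding cyc_def by blast
    have "msmul M x (r \<otimes>\<^bsub>R\<^esub> s) = msmul M (msmul M x r) s"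
      using RM assms r(1) \<open>s \<in> carrier R\<close> unfolding right_module_def by blast
    moreover have "r \<otimes>\<^bsub>R\<^esub> s \<in> carrier R" using r(1) \<open>s \<in> carrier R\<close> by simp
    ultimately show "msmul M a s \<in> cyc R M x" unfolding cyc_def r(2) by (metis (mono_tags, lifting) mem_Collect_eq)
  qed
  ultimately show ?thesis unfolding submod_def by blast
qed

lemma cyc_quot: assumes N: "submod R M N" and x: "x \<in> mcarrier M"
  shows "cyc R (quot_mod M N) (mcoset M N x) = quot_sub M N (msum M (cyc R M x) N)"
proof
  show "cyc R (quot_mod M N) (mcoset M N x) \<subseteq> quot_sub M N (msum M (cyc R M x) N)"
  proof
    fix C assume "C \<in> cyc R (quot_mod M N) (mcoset M N x)"
    then obtain r where r: "r \<in> carrier R" "C = mcoset M N (msmul M x r)"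
      unfolding cyc_def using q_smul[OF N x] by auto
    have "madd M (msmul M x r) (mzero M) \<in> msum M (cyc R M x) N"
      using r(1) submod_zero[OF N] unfolding cyc_def by (intro msumI) auto
    then show "C \<in> quot_sub M N (msum M (cyc R M x) N)"
      using r x unfolding quot_sub_def by force
  qed
next
  show "quot_sub M N (msum M (cyc R M x) N) \<subseteq> cyc R (quot_mod M N) (mcoset M N x)"
  proof
    fix C assume "C \<in> quot_sub M N (msum M (cyc R M x) N)"
    then obtain r n where rn: "r \<in> carrier R" "n \<in> N" "C = mcoset M N (madd M (msmul M x r) n)"
      unfolding quot_sub_def cyc_def msum_def by auto
    have "madd M (msmul M x r) n \<in> mcoset M N (msmul M x r)" using rn by (auto simp: mcoset_iff)
    then have "C = mcoset M N (msmul M x r)" using rn mcoset_eq[OF N] x by simp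
    then show "C \<in> cyc R (quot_mod M N) (mcoset M N x)"
      unfolding cyc_def using q_smul[OF N x] rn(1) by auto
  qed
qed

lemma absorb: assumes "submod R M A" "submod R M B" "submod R M N" "submod R M Y" "N \<subseteq> Y"
  shows "msum M (msum M (msum M A N) (msum M B N)) Y \<subseteq> msum M (msum M A B) Y"
proof
  fix z assume "z \<in> msum M (msum M (msum M A N) (msum M B N)) Y"
  then obtain a b n1 n2 y where e: "a \<in> A" "b \<in> B" "n1 \<in> N" "n2 \<in> N" "y \<in> Y"
    "z = madd M (madd M (madd M a n1) (madd M b n2)) y" by (auto simp: msum_iff)
  have c: "a \<in> mcarrier M" "b \<in> mcarrier M" "n1 \<in> mcarrier M" "n2 \<in> mcarrier M" "y \<in> mcarrier M"
    using e assms submod_c by blast+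
  have "z = madd M (madd M a b) (madd M (madd M n1 n2) y)" using e(6) c by (simp add: add_ac)
  moreover have "madd M (madd M n1 n2) y \<in> Y" using e assms submod_add by blast
  ultimately show "z \<in> msum M (msum M A B) Y" using e msumI by metis
qed

lemma transfer:
  assumes N: "submod R M N" and W: "submod R M W" and T: "submod R M T" "W \<subseteq> T"
    and sm: "small R (quot_mod M W) (quot_sub M W T)"
    and T': "submod R M T'" "N \<subseteq> T'" "msum M W N \<subseteq> T'"
    and le: "\<And>Y. submod R M Y \<Longrightarrow> N \<subseteq> Y \<Longrightarrow> msum M T' Y \<subseteq> msum M T Y"
  shows "small R (quot_mod (quot_mod M N) (quot_sub M N (msum M W N)))
            (quot_sub (quot_mod M N) (quot_sub M N (msum M W N)) (quot_sub M N T'))"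
proof -
  interpret L: rmodule R "quot_mod M N" using quot_module[OF N] by unfold_locales
  define WN where "WN = msum M W N"
  have Wc: "W \<subseteq> mcarrier M" "N \<subseteq> mcarrier M" using submod_c W N by blast+
  have WN: "submod R M WN" "N \<subseteq> WN" "W \<subseteq> WN"
    using submod_msum[OF W N] msum_right[OF submod_zero[OF W] Wc(2)] msum_left[OF submod_zero[OF N] Wc(1)]
    unfolding WN_def by auto
  have Tc: "T' \<subseteq> mcarrier M" using T'(1) submod_c by blast
  have W'sub: "submod R (quot_mod M N) (quot_sub M N WN)" using submod_qs[OF N WN(1,2)] .
  have Ssub: "submod R (quot_mod M N) (quot_sub M N T')" using submod_qs[OF N T'(1,2)] .
  have WS: "quot_sub M N WN \<subseteq> quot_sub M N T'" using T'(3) unfolding WN_def quot_sub_def by blast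
  have key: "\<forall>Y'. submod R (quot_mod M N) Y' \<longrightarrow> quot_sub M N WN \<subseteq> Y' \<longrightarrow>
      msum (quot_mod M N) (quot_sub M N T') Y' = mcarrier (quot_mod M N) \<longrightarrow> Y' = mcarrier (quot_mod M N)"
  proof (intro allI impI)
    fix Y' assume Y': "submod R (quot_mod M N) Y'" "quot_sub M N WN \<subseteq> Y'"
      "msum (quot_mod M N) (quot_sub M N T') Y' = mcarrier (quot_mod M N)"
    define Y where "Y = \<Union>Y'"
    have Y: "submod R M Y" "N \<subseteq> Y" "Y' = quot_sub M N Y" using submod_q_rev[OF N Y'(1)] Y_def by auto
    have Yc: "Y \<subseteq> mcarrier M" using submod_c Y(1) by blast
    have "quot_sub M N (msum M T' Y) = quot_sub M N (mcarrier M)"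
      using Y'(3) Y(3) qs_msum[OF N Tc Yc] q_car'[OF N] by simp
    moreover have "sat N (msum M T' Y)"
      using sat_submod[OF N] submod_msum[OF T'(1) Y(1)] Y(2) msum_right[OF submod_zero[OF T'(1)] Yc] by blast
    moreover have "sat N (mcarrier M)" using sat_submod[OF N submod_carrier] submod_c[OF N] by blast
    ultimately have car: "msum M T' Y = mcarrier M" using qs_inj[OF N] by blast
    have "WN \<subseteq> Y" using qs_mono_rev[OF N sat_submod[OF N Y(1,2)]] WN(1) submod_c Y'(2) Y(3) by blast
    then have WY: "W \<subseteq> Y" using WN(3) by blast
    have "msum M T Y = mcarrier M"
      using car le[OF Y(1,2)] msum_car[of T Y] T(1) Yc submod_c by blast
    then have "Y = mcarrier M" using sm small_char[OF W T] Y(1) WY by blast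
    then show "Y' = mcarrier (quot_mod M N)" using Y(3) q_car'[OF N] by simp
  qed
  have "small R (quot_mod (quot_mod M N) (quot_sub M N WN)) (quot_sub (quot_mod M N) (quot_sub M N WN) (quot_sub M N T'))"
    using L.small_char[OF W'sub Ssub WS] key by blast
  then show ?thesis unfolding WN_def .
qed

end



context rmodule
begin

lemma quot_pg:
  assumes pg: "pg_lifting R M" and N: "submod R M N"
    and H: "\<And>D C. submod R M D \<Longrightarrow> submod R M C \<Longrightarrow> msum M D C = mcarrier M \<Longrightarrow>
              D \<inter> C = {mzero M} \<Longrightarrow> msum M D N \<inter> msum M C N \<subseteq> N"
  shows "pg_lifting R (quot_mod M N)"
  unfolding pg_lifting_def
proof
  fix c assume "c \<in> mcarrier (quot_mod M N)"
  then obtain x where x: "x \<in> mcarrier M" "c = mcoset M N x" using q_car[OF N] by auto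
  obtain D where D: "direct_summand R M D" "beta_star R M (cyc R M x) D"
    using pg x(1) unfolding pg_lifting_def by blast
  obtain C where C: "submod R M C" "msum M D C = mcarrier M" "D \<inter> C = {mzero M}" "submod R M D"
    using D(1) unfolding direct_summand_def by blast
  define X where "X = cyc R M x"
  have X: "submod R M X" using submod_cyc[OF x(1)] X_def by simp
  have Nc: "N \<subseteq> mcarrier M" using submod_c N by blast
  have Xc: "X \<subseteq> mcarrier M" "D \<subseteq> mcarrier M" "C \<subseteq> mcarrier M" using submod_c X C by blast+
  define XN where "XN = msum M X N"
  define DN where "DN = msum M D N"
  define CN where "CN = msum M C N"
  have XN: "submod R M XN" "N \<subseteq> XN" "X \<subseteq> XN"
    using submod_msum[OF X N] msum_right[OF submod_zero[OF X] Nc] msum_left[OF submod_zero[OF N] Xc(1)]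
    unfolding XN_def by auto
  have DN: "submod R M DN" "N \<subseteq> DN" "D \<subseteq> DN"
    using submod_msum[OF C(4) N] msum_right[OF submod_zero[OF C(4)] Nc] msum_left[OF submod_zero[OF N] Xc(2)]
    unfolding DN_def by auto
  have CN: "submod R M CN" "N \<subseteq> CN" "C \<subseteq> CN"
    using submod_msum[OF C(1) N] msum_right[OF submod_zero[OF C(1)] Nc] msum_left[OF submod_zero[OF N] Xc(3)]
    unfolding CN_def by auto
  have XNc: "XN \<subseteq> mcarrier M" "DN \<subseteq> mcarrier M" "CN \<subseteq> mcarrier M"
    using XN DN CN submod_c by blast+
  define D' where "D' = quot_sub M N DN"
  define C' where "C' = quot_sub M N CN"
  have "direct_summand R (quot_mod M N) D'"
    unfolding direct_summand_def
  proof (intro conjI exI[of _ C'])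
    show "submod R (quot_mod M N) D'" using submod_qs[OF N DN(1,2)] D'_def by simp
    show "submod R (quot_mod M N) C'" using submod_qs[OF N CN(1,2)] C'_def by simp
    have "msum M DN CN = mcarrier M"
      using msum_car[OF XNc(2,3)] msum_mono[OF DN(3) CN(3)] C(2) by blast
    then show "msum (quot_mod M N) D' C' = mcarrier (quot_mod M N)"
      unfolding D'_def C'_def using qs_msum[OF N XNc(2,3)] q_car'[OF N] by simp
    have "DN \<inter> CN = N" using H[OF C(4) C(1) C(2) C(3)] DN(2) CN(2) unfolding DN_def CN_def by blast
    then have "D' \<inter> C' = quot_sub M N N"
      unfolding D'_def C'_def using qs_Int[OF N sat_submod[OF N DN(1,2)] sat_submod[OF N CN(1,2)]] by simp
    also have "\<dots> = {N}" unfolding quot_sub_def using mcoset_N[OF N] submod_zero[OF N] by blast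
    finally show "D' \<inter> C' = {mzero (quot_mod M N)}" using q_zero[OF N] by simp
  qed
  moreover have "beta_star R (quot_mod M N) (cyc R (quot_mod M N) c) D'"
  proof -
    have cy: "cyc R (quot_mod M N) c = quot_sub M N XN"
      using cyc_quot[OF N x(1)] x(2) X_def XN_def by simp
    define T where "T = msum M X D"
    define T' where "T' = msum M XN DN"
    have sum': "msum (quot_mod M N) (quot_sub M N XN) D' = quot_sub M N T'"
      unfolding D'_def T'_def using qs_msum[OF N XNc(1,2)] .
    have T: "submod R M T" "X \<subseteq> T" "D \<subseteq> T" unfolding T_def
      using submod_msum[OF X C(4)] msum_left[OF submod_zero[OF C(4)] Xc(1)]
        msum_right[OF submod_zero[OF X] Xc(2)] by auto
    have T': "submod R M T'" "XN \<subseteq> T'" "DN \<subseteq> T'" unfolding T'_def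
      using submod_msum[OF XN(1) DN(1)] msum_left[OF submod_zero[OF DN(1)] XNc(1)]
        msum_right[OF submod_zero[OF XN(1)] XNc(2)] by auto
    have NT': "N \<subseteq> T'" using T' XN by blast
    have le: "\<And>Y. submod R M Y \<Longrightarrow> N \<subseteq> Y \<Longrightarrow> msum M T' Y \<subseteq> msum M T Y"
      unfolding T'_def T_def XN_def DN_def using absorb[OF X C(4) N] by blast
    have s1: "small R (quot_mod M X) (quot_sub M X T)" "small R (quot_mod M D) (quot_sub M D T)"
      using D(2) unfolding beta_star_def T_def X_def by blast+
    have r1: "small R (quot_mod (quot_mod M N) (quot_sub M N XN))
            (quot_sub (quot_mod M N) (quot_sub M N XN) (quot_sub M N T'))"
      using transfer[OF N X T(1,2) s1(1) T'(1) NT'] T'(2) le unfolding XN_def by blast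
    have r2: "small R (quot_mod (quot_mod M N) D')
            (quot_sub (quot_mod M N) D' (quot_sub M N T'))"
      using transfer[OF N C(4) T(1,3) s1(2) T'(1) NT'] T'(3) le unfolding DN_def D'_def by blast
    show ?thesis unfolding beta_star_def cy sum' using r1 r2 by blast
  qed
  ultimately show "\<exists>D. direct_summand R (quot_mod M N) D \<and> beta_star R (quot_mod M N) (cyc R (quot_mod M N) c) D"
    by blast
qed

end



context rmodule
begin

lemma msum_comm: "A \<subseteq> mcarrier M \<Longrightarrow> B \<subseteq> mcarrier M \<Longrightarrow> msum M A B = msum M B A"
  unfolding msum_def using add_comm by blast

lemma msum_zero: assumes "submod R M N" shows "msum M N {mzero M} = N"
proof
  show "msum M N {mzero M} \<subseteq> N" using submod_c[OF assms] by (auto simp: msum_iff)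
  show "N \<subseteq> msum M N {mzero M}" using submod_c[OF assms] by (force simp: msum_iff)
qed

lemma H_distr: assumes "mod_distributive R M" "submod R M N" "submod R M D" "submod R M C"
  "D \<inter> C = {mzero M}" shows "msum M D N \<inter> msum M C N \<subseteq> N"
proof -
  have c: "N \<subseteq> mcarrier M" "D \<subseteq> mcarrier M" "C \<subseteq> mcarrier M" using assms submod_c by blast+
  have "msum M N (D \<inter> C) = msum M N D \<inter> msum M N C" using assms unfolding mod_distributive_def by blast
  then show ?thesis using msum_zero[OF assms(2)] assms(5) msum_comm c by simp
qed

lemma move: assumes "a \<in> mcarrier M" "b \<in> mcarrier M" "c \<in> mcarrier M" "e \<in> mcarrier M"
  "madd M a b = madd M c e" shows "madd M a (neg c) = madd M e (neg b)"
proof -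
  have "madd M a (neg c) = madd M (madd M a b) (madd M (neg b) (neg c))"
    using assms(1-4) by (simp add: add_assoc)
  also have "\<dots> = madd M (madd M e c) (madd M (neg c) (neg b))"
    using assms by (simp add: add_comm[of c e] add_comm[of "neg b" "neg c"])
  also have "\<dots> = madd M e (neg b)"
    using assms(1-4) by (simp add: add_assoc)
  finally show ?thesis .
qed

lemma H_proj: assumes P: "projection_invariant R M N" and D: "submod R M D" and C: "submod R M C"
  and DC: "msum M D C = mcarrier M" "D \<inter> C = {mzero M}"
  shows "msum M D N \<inter> msum M C N \<subseteq> N"
proof -
  have N: "submod R M N" using P unfolding projection_invariant_def by blast
  have uniq: "\<And>d c d' c'. d \<in> D \<Longrightarrow> c \<in> C \<Longrightarrow> d' \<in> D \<Longrightarrow> c' \<in> C \<Longrightarrow>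
     madd M d c = madd M d' c' \<Longrightarrow> d = d'"
  proof -
    fix d c d' c' assume h: "d \<in> D" "c \<in> C" "d' \<in> D" "c' \<in> C" "madd M d c = madd M d' c'"
    have cc: "d \<in> mcarrier M" "c \<in> mcarrier M" "d' \<in> mcarrier M" "c' \<in> mcarrier M"
      using h D C submod_c by blast+
    have e: "madd M d (neg d') = madd M c' (neg c)" using move[OF cc(1,2,3,4) h(5)] .
    have "madd M d (neg d') \<in> D" using submod_add[OF D h(1) submod_neg[OF D h(3)]] .
    moreover have "madd M c' (neg c) \<in> C" using submod_add[OF C h(4) submod_neg[OF C h(2)]] .
    ultimately have z: "madd M d (neg d') = mzero M" using e DC(2) by auto
    have "d = madd M (madd M d (neg d')) d'" using cc by (simp add: add_assoc)
    then show "d = d'" using z cc by simp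
  qed
  define e where "e y = (SOME d. d \<in> D \<and> (\<exists>c\<in>C. y = madd M d c))" for y
  have e_prop: "\<And>y. y \<in> mcarrier M \<Longrightarrow> e y \<in> D \<and> (\<exists>c\<in>C. y = madd M (e y) c)"
  proof -
    fix y assume "y \<in> mcarrier M"
    then have "y \<in> msum M D C" using DC(1) by simp
    then have "\<exists>d. d \<in> D \<and> (\<exists>c\<in>C. y = madd M d c)" by (auto simp: msum_iff)
    then show "e y \<in> D \<and> (\<exists>c\<in>C. y = madd M (e y) c)" unfolding e_def by (rule someI_ex)
  qed
  have e_eq: "\<And>y d c. d \<in> D \<Longrightarrow> c \<in> C \<Longrightarrow> y = madd M d c \<Longrightarrow> e y = d"
  proof -
    fix y d c assume h: "d \<in> D" "c \<in> C" "y = madd M d c"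
    have "y \<in> mcarrier M" using h D C submod_c by simp
    then obtain c' where "e y \<in> D" "c' \<in> C" "y = madd M (e y) c'" using e_prop by blast
    then show "e y = d" using uniq h by metis
  qed
  have endo: "endo R M e"
    unfolding endo_def
  proof (intro conjI ballI)
    fix x assume "x \<in> mcarrier M" then show "e x \<in> mcarrier M" using e_prop D submod_c by blast
  next
    fix x y assume xy: "x \<in> mcarrier M" "y \<in> mcarrier M"
    obtain cx where cx: "e x \<in> D" "cx \<in> C" "x = madd M (e x) cx" using e_prop xy(1) by blast
    obtain cy where cy: "e y \<in> D" "cy \<in> C" "y = madd M (e y) cy" using e_prop xy(2) by blast
    have cc: "e x \<in> mcarrier M" "e y \<in> mcarrier M" "cx \<in> mcarrier M" "cy \<in> mcarrier M"
      using cx cy D C submod_c by blast+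
    have "madd M (madd M (e x) cx) (madd M (e y) cy) = madd M (madd M (e x) (e y)) (madd M cx cy)"
      using cc by (simp add: add_ac)
    moreover have "madd M x y = madd M (madd M (e x) cx) (madd M (e y) cy)"
      using arg_cong2[of x _ y _ "madd M", OF cx(3) cy(3)] .
    ultimately have "madd M x y = madd M (madd M (e x) (e y)) (madd M cx cy)" by simp
    then show "e (madd M x y) = madd M (e x) (e y)"
      using e_eq submod_add[OF D cx(1) cy(1)] submod_add[OF C cx(2) cy(2)] by blast
  next
    fix x r assume xr: "x \<in> mcarrier M" "r \<in> carrier R"
    obtain cx where cx: "e x \<in> D" "cx \<in> C" "x = madd M (e x) cx" using e_prop xr(1) by blast
    have cc: "e x \<in> mcarrier M" "cx \<in> mcarrier M" using cx D C submod_c by blast+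
    have "msmul M x r = msmul M (madd M (e x) cx) r" using arg_cong[of x _ "\<lambda>u. msmul M u r", OF cx(3)] .
    then have "msmul M x r = madd M (msmul M (e x) r) (msmul M cx r)"
      using cc xr(2) smul_add by simp
    then show "e (msmul M x r) = msmul M (e x) r"
      using e_eq submod_smul[OF D cx(1) xr(2)] submod_smul[OF C cx(2) xr(2)] by blast
  qed
  have idem: "\<forall>x\<in>mcarrier M. e (e x) = e x"
  proof
    fix x assume "x \<in> mcarrier M"
    then have "e x \<in> D" using e_prop by blast
    moreover then have "e x = madd M (e x) (mzero M)" using D submod_c by simp
    ultimately show "e (e x) = e x" using e_eq submod_zero[OF C] by metis
  qed
  have eN: "e ` N \<subseteq> N" using P endo idem unfolding projection_invariant_def by blast
  show ?thesis
  proof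
    fix z assume "z \<in> msum M D N \<inter> msum M C N"
    then obtain d n1 c n2 where h: "d \<in> D" "n1 \<in> N" "c \<in> C" "n2 \<in> N"
      "z = madd M d n1" "z = madd M c n2" by (auto simp: msum_iff)
    have cc: "d \<in> mcarrier M" "n1 \<in> mcarrier M" "c \<in> mcarrier M" "n2 \<in> mcarrier M"
      using h D C N submod_c by blast+
    have m: "madd M d (neg c) = madd M n2 (neg n1)" using move[OF cc] h(5,6) by simp
    have mN: "madd M n2 (neg n1) \<in> N" using submod_add[OF N h(4) submod_neg[OF N h(2)]] .
    have "e (madd M n2 (neg n1)) = d" using e_eq[OF h(1) submod_neg[OF C h(3)]] m by simp
    then have "d \<in> N" using eN mN by blast
    then show "z \<in> N" using h submod_add[OF N] by blast
  qed
qed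

end

theorem corollary3p11:
  fixes R :: "('r, 'b) ring_scheme" and M :: "('a, 'r) rmod"
  assumes "right_module R M"
    and "pg_lifting R M"
  shows "((mod_distributive R M \<or> duo_module R M) \<longrightarrow>
            (\<forall>N. submod R M N \<longrightarrow> pg_lifting R (quot_mod M N)))
       \<and> (\<forall>N. projection_invariant R M N \<longrightarrow> pg_lifting R (quot_mod M N))
       \<and> (\<forall>A. fully_invariant R M A \<longrightarrow> pg_lifting R (quot_mod M A))"
proof -
  interpret rmodule R M using assms(1) by unfold_locales
  have PI: "\<And>N. projection_invariant R M N \<Longrightarrow> pg_lifting R (quot_mod M N)"
  proof -
    fix N assume P: "projection_invariant R M N"
    have N: "submod R M N" using P unfolding projection_invariant_def by blast
    show "pg_lifting R (quot_mod M N)"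
      using quot_pg[OF assms(2) N] H_proj[OF P] by blast
  qed
  have FI: "\<And>A. fully_invariant R M A \<Longrightarrow> projection_invariant R M A"
    unfolding fully_invariant_def projection_invariant_def by blast
  have DI: "mod_distributive R M \<Longrightarrow> submod R M N \<Longrightarrow> pg_lifting R (quot_mod M N)" for N
    using quot_pg[OF assms(2)] H_distr by blast
  have DU: "duo_module R M \<Longrightarrow> submod R M N \<Longrightarrow> pg_lifting R (quot_mod M N)" for N
    using PI FI unfolding duo_module_def by blast
  show ?thesis using PI FI DI DU by blast
qed



end
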